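(* Let $T$ be a complete theory. If $\langle\varphi(x,y),\langle a_\eta\rangle_{\eta\in{}^{\omega>}2}\rangle$ is an antichain tree, then $\varphi(x,y)$ witnesses SOP$_1$.
   Context: Work in a monster model of $T$; ${}^{\omega>}2$ is the binary tree with initial-segment order $\trianglelefteq$. A subset $X\subseteq{}^{\omega>}2$ is an antichain if its elements are pairwise $\trianglelefteq$-incomparable. $\langle\varphi(x,y),\langle a_\eta\rangle_{\eta\in{}^{\omega>}2}\rangle$ is an antichain tree if for every $X\subseteq{}^{\omega>}2$, $\{\varphi(x,a_\eta):\eta\in X\}$ is consistent if and only if $X$ is an antichain. $\varphi$ witnesses SOP$_1$ if there is $\langle b_\eta\rangle_{\eta\in{}^{\omega>}2}$ such that for every $\eta\in{}^\omega2$, $\{\varphi(x,b_{\eta\lceil n}):n<\omega\}$ is consistent, and for all $\eta,\nu\in{}^{\omega>}2$, $\{\varphi(x,b_{\eta^\frown\langle1\rangle}),\varphi(x,b_{\eta^\frown\langle0\rangle^\frown\nu})\}$ is inconsistent. *)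

theory Defs
  imports "HOL-Library.Sublist"
begin

text \<open>We work in a monster model whose elements (or tuples
of elements) of the sort of the variable tuple x form the type 'x and those of the
parameter tuple y form the type 'p. A formula phi(x,y) is represented by its
satisfaction relation in the monster model, phi :: 'x => 'p => bool.
A set of formulas with parameters (each a predicate on 'x) is consistent iff it is
finitely satisfiable in the monster model (equivalently, by compactness, consistent
with the elementary diagram of the monster model).\<close>

definition consistent :: "('x \<Rightarrow> bool) set \<Rightarrow> bool" where
  "consistent S \<longleftrightarrow> (\<forall>F. F \<subseteq> S \<longrightarrow> finite F \<longrightarrow> (\<exists>x. \<forall>\<psi>\<in>F. \<psi> x))"

text \<open>The binary tree 2^{<omega} is bool list (False = 0, True = 1), ordered by
the initial-segment (prefix) order.\<close>

definition antichain :: "bool list set \<Rightarrow> bool" where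
  "antichain X \<longleftrightarrow> (\<forall>\<eta>\<in>X. \<forall>\<nu>\<in>X. \<eta> \<noteq> \<nu> \<longrightarrow> \<not> prefix \<eta> \<nu> \<and> \<not> prefix \<nu> \<eta>)"

definition antichain_tree :: "('x \<Rightarrow> 'p \<Rightarrow> bool) \<Rightarrow> (bool list \<Rightarrow> 'p) \<Rightarrow> bool" where
  "antichain_tree \<phi> a \<longleftrightarrow>
     (\<forall>X. consistent ((\<lambda>\<eta>. \<lambda>x. \<phi> x (a \<eta>)) ` X) \<longleftrightarrow> antichain X)"

definition restr :: "(nat \<Rightarrow> bool) \<Rightarrow> nat \<Rightarrow> bool list" where
  "restr \<eta> n = map \<eta> [0..<n]"

definition witnesses_SOP1 :: "('x \<Rightarrow> 'p \<Rightarrow> bool) \<Rightarrow> bool" where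
  "witnesses_SOP1 \<phi> \<longleftrightarrow> (\<exists>b :: bool list \<Rightarrow> 'p.
     (\<forall>\<eta> :: nat \<Rightarrow> bool. consistent ((\<lambda>n. \<lambda>x. \<phi> x (b (restr \<eta> n))) ` UNIV)) \<and>
     (\<forall>\<eta> \<nu>. \<not> consistent {\<lambda>x. \<phi> x (b (\<eta> @ [True])), \<lambda>x. \<phi> x (b (\<eta> @ [False] @ \<nu>))}))"

end

theory Submission
  imports Defs
begin

definition hh :: "bool list \<Rightarrow> bool list" where
  "hh \<eta> = concat (map (\<lambda>b. if b then [True] else [True, False]) \<eta>)"

definition ff :: "bool list \<Rightarrow> bool list" where
  "ff \<eta> = hh \<eta> @ [False]"

lemma hh_append[simp]: "hh (xs @ ys) = hh xs @ hh ys"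
  by (simp add: hh_def)

lemma hh_start: "ys \<noteq> [] \<Longrightarrow> \<exists>zs. hh ys = True # zs"
  by (cases ys) (auto simp: hh_def)

lemma restr_add: "restr \<eta> (m + k) = restr \<eta> m @ map \<eta> [m..<m+k]"
proof -
  have "[0..<m+k] = [0..<m] @ [m..<m+k]" by (rule upt_add_eq_append) simp
  then show ?thesis by (simp add: restr_def)
qed

lemma ff_incomp:
  assumes "m < n"
  shows "\<not> prefix (ff (restr \<eta> m)) (ff (restr \<eta> n)) \<and> \<not> prefix (ff (restr \<eta> n)) (ff (restr \<eta> m))"
proof -
  obtain k where k: "n = m + k" "k > 0" using assms by (metis less_imp_add_positive)
  define rs where "rs = map \<eta> [m..<m+k]"
  have rs: "rs \<noteq> []" using k by (simp add: rs_def)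
  obtain zs where zs: "hh rs = True # zs" using hh_start[OF rs] by blast
  have e: "ff (restr \<eta> n) = hh (restr \<eta> m) @ (True # zs @ [False])"
    using k zs by (simp add: ff_def restr_add rs_def[symmetric])
  show ?thesis unfolding e by (simp add: ff_def)
qed

theorem proposition4p4:
  fixes \<phi> :: "'x \<Rightarrow> 'p \<Rightarrow> bool" and a :: "bool list \<Rightarrow> 'p"
  assumes "antichain_tree \<phi> a"
  shows "witnesses_SOP1 \<phi>"
proof -
  have AT: "\<And>X. consistent ((\<lambda>\<eta>. \<lambda>x. \<phi> x (a \<eta>)) ` X) \<longleftrightarrow> antichain X"
    using assms unfolding antichain_tree_def by blast
  define b where "b = (\<lambda>\<eta>. a (ff \<eta>))"
  have 1: "consistent ((\<lambda>n. \<lambda>x. \<phi> x (b (restr \<eta> n))) ` UNIV)" for \<eta>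
  proof -
    have eq: "(\<lambda>n. \<lambda>x. \<phi> x (b (restr \<eta> n))) ` UNIV
        = (\<lambda>\<eta>. \<lambda>x. \<phi> x (a \<eta>)) ` ((\<lambda>n. ff (restr \<eta> n)) ` UNIV)"
      by (auto simp: b_def)
    have "antichain ((\<lambda>n. ff (restr \<eta> n)) ` UNIV)"
      unfolding antichain_def
    proof (clarify)
      fix m n
      assume ne: "ff (restr \<eta> m) \<noteq> ff (restr \<eta> n)"
      then have "m \<noteq> n" by auto
      then show "\<not> prefix (ff (restr \<eta> m)) (ff (restr \<eta> n)) \<and> \<not> prefix (ff (restr \<eta> n)) (ff (restr \<eta> m))"
        using ff_incomp[of m n \<eta>] ff_incomp[of n m \<eta>] by (cases "m < n") auto
    qed
    then show ?thesis unfolding eq using AT by blast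
  qed
  have 2: "\<not> consistent {\<lambda>x. \<phi> x (b (\<eta> @ [True])), \<lambda>x. \<phi> x (b (\<eta> @ [False] @ \<nu>))}" for \<eta> \<nu>
  proof -
    have eq: "{\<lambda>x. \<phi> x (b (\<eta> @ [True])), \<lambda>x. \<phi> x (b (\<eta> @ [False] @ \<nu>))}
       = (\<lambda>\<eta>. \<lambda>x. \<phi> x (a \<eta>)) ` {ff (\<eta> @ [True]), ff (\<eta> @ [False] @ \<nu>)}"
      by (simp add: b_def)
    have u: "ff (\<eta> @ [True]) = hh \<eta> @ [True, False]" by (simp add: ff_def hh_def)
    have v: "ff (\<eta> @ [False] @ \<nu>) = hh \<eta> @ [True, False] @ hh \<nu> @ [False]" by (simp add: ff_def hh_def)
    have "\<not> antichain {ff (\<eta> @ [True]), ff (\<eta> @ [False] @ \<nu>)}"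
      unfolding antichain_def u v by auto
    then show ?thesis unfolding eq using AT by blast
  qed
  show ?thesis unfolding witnesses_SOP1_def using 1 2 by blast
qed

end
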